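(* Let $X$ be a topological space and $G\subset\mathrm{Hom}(X)$ a group of homeomorphisms such that the topology of pointwise convergence $\tau_p$ is an admissible group topology on $G$; $G$ carries $\tau_p$. Let $\mathcal U_X$ be an equiuniformity on $X$ for the action of $G$, and let $\mathcal U$ and $R_{\mathcal K}$ be the uniformities on $G$ defined below. If $\mathcal U=R_{\mathcal K}$ and $\mathcal U_X$ is totally bounded, then $G$ is Roelcke precompact.
   Context: Admissible group topology: $G$ is a topological group and the action on $X$ is continuous. $\tau_p$ has subbase $\{f\in G\mid f(x)\in O\}$, $x\in X$, $O$ open. An equiuniformity on $X$ is a compatible uniformity for which each $g\in G$ is uniformly continuous and for every uniform covering $u$ there are a neighbourhood $O$ of the identity in $G$ and a uniform covering $v$ with $\{OV\mid V\in v\}$ refining $u$. $\mathcal U$ is the uniformity on $G$ with base the coverings $\{\{h\in G\mid (g(x_k),h(x_k))\in\mathrm U,\ k=1,\dots,n\}\mid g\in G\}$, for $x_1,\dots,x_n\in X$ and $\mathrm U$ an entourage of $\mathcal U_X$. $R_{\mathcal K}$ is the uniformity on $G$ with base the coverings $\{Og\,\mathrm{St}_{x_1,\dots,x_n}\mid g\in G\}$, $O$ a neighbourhood of the identity, $x_1,\dots,x_n\in X$, where $\mathrm{St}_{x_1,\dots,x_n}$ is the pointwise stabilizer. The Roelcke uniformity $L\wedge R$ on a topological group is the greatest lower bound of the left and right uniformities (base: coverings $\{UgU\mid g\in G\}$, $U$ a neighbourhood of the identity); $G$ is Roelcke precompact if $L\wedge R$ is totally bounded. *)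

theory Defs
  imports "HOL-Analysis.Analysis"
begin

text \<open>Elements of G are maps on the whole type that are the identity outside topspace X;
  composition is (f*g)(x) = f(g(x)); the identity of the group is id.\<close>

definition hom_group :: "'a topology \<Rightarrow> ('a \<Rightarrow> 'a) set \<Rightarrow> bool" where
  "hom_group X G \<longleftrightarrow>
     (\<forall>g\<in>G. homeomorphic_map X X g \<and> (\<forall>x. x \<notin> topspace X \<longrightarrow> g x = x)) \<and>
     id \<in> G \<and> (\<forall>f\<in>G. \<forall>g\<in>G. f \<circ> g \<in> G) \<and>
     (\<forall>g\<in>G. \<exists>h\<in>G. h \<circ> g = id \<and> g \<circ> h = id)"

definition ginv :: "('a \<Rightarrow> 'a) set \<Rightarrow> ('a \<Rightarrow> 'a) \<Rightarrow> ('a \<Rightarrow> 'a)" where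
  "ginv G g = (THE h. h \<in> G \<and> h \<circ> g = id \<and> g \<circ> h = id)"

definition taup :: "'a topology \<Rightarrow> ('a \<Rightarrow> 'a) set \<Rightarrow> ('a \<Rightarrow> 'a) topology" where
  "taup X G = topology_generated_by
     (insert G {{f \<in> G. f x \<in> Ob} | x Ob. x \<in> topspace X \<and> openin X Ob})"

definition topological_group_on :: "('a \<Rightarrow> 'a) topology \<Rightarrow> ('a \<Rightarrow> 'a) set \<Rightarrow> bool" where
  "topological_group_on tp G \<longleftrightarrow> topspace tp = G \<and>
     continuous_map (prod_topology tp tp) tp (\<lambda>(f, g). f \<circ> g) \<and>
     continuous_map tp tp (ginv G)"

definition admissible_group_topology :: "'a topology \<Rightarrow> ('a \<Rightarrow> 'a) set \<Rightarrow> ('a \<Rightarrow> 'a) topology \<Rightarrow> bool" where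
  "admissible_group_topology X G tp \<longleftrightarrow> topological_group_on tp G \<and>
     continuous_map (prod_topology tp X) X (\<lambda>(g, x). g x)"

definition nbhd_id :: "('a \<Rightarrow> 'a) topology \<Rightarrow> ('a \<Rightarrow> 'a) set \<Rightarrow> bool" where
  "nbhd_id tp Ob \<longleftrightarrow> Ob \<subseteq> topspace tp \<and> (\<exists>W. openin tp W \<and> id \<in> W \<and> W \<subseteq> Ob)"

definition is_uniformity :: "'a set \<Rightarrow> ('a \<times> 'a) set set \<Rightarrow> bool" where
  "is_uniformity S E \<longleftrightarrow> E \<noteq> {} \<and> (\<forall>U\<in>E. Id_on S \<subseteq> U \<and> U \<subseteq> S \<times> S) \<and>
     (\<forall>U\<in>E. \<forall>V. U \<subseteq> V \<and> V \<subseteq> S \<times> S \<longrightarrow> V \<in> E) \<and>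
     (\<forall>U\<in>E. \<forall>V\<in>E. U \<inter> V \<in> E) \<and>
     (\<forall>U\<in>E. U\<inverse> \<in> E) \<and>
     (\<forall>U\<in>E. \<exists>V\<in>E. V O V \<subseteq> U)"

definition compatible_uniformity :: "'a topology \<Rightarrow> ('a \<times> 'a) set set \<Rightarrow> bool" where
  "compatible_uniformity X E \<longleftrightarrow> is_uniformity (topspace X) E \<and>
     (\<forall>Ob. openin X Ob \<longleftrightarrow> Ob \<subseteq> topspace X \<and> (\<forall>x\<in>Ob. \<exists>U\<in>E. U `` {x} \<subseteq> Ob))"

definition refines :: "'b set set \<Rightarrow> 'b set set \<Rightarrow> bool" where
  "refines v u \<longleftrightarrow> (\<forall>B\<in>v. \<exists>A\<in>u. B \<subseteq> A)"

definition ucovs :: "'a set \<Rightarrow> ('a \<times> 'a) set set \<Rightarrow> 'a set set set" where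
  "ucovs S E = {u. u \<subseteq> Pow S \<and> (\<exists>V\<in>E. refines {V `` {x} | x. x \<in> S} u)}"

definition ucovs_base :: "'b set \<Rightarrow> 'b set set set \<Rightarrow> 'b set set set" where
  "ucovs_base S B = {u. u \<subseteq> Pow S \<and> (\<exists>b\<in>B. refines b u)}"

definition totally_bounded_cov :: "'b set \<Rightarrow> 'b set set set \<Rightarrow> bool" where
  "totally_bounded_cov S C \<longleftrightarrow> (\<forall>u\<in>C. \<exists>v\<subseteq>u. finite v \<and> S \<subseteq> \<Union>v)"

definition setmul :: "('a \<Rightarrow> 'a) set \<Rightarrow> ('a \<Rightarrow> 'a) set \<Rightarrow> ('a \<Rightarrow> 'a) set" where
  "setmul A B = {a \<circ> b | a b. a \<in> A \<and> b \<in> B}"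

definition equiuniformity :: "'a topology \<Rightarrow> ('a \<Rightarrow> 'a) set \<Rightarrow> ('a \<times> 'a) set set \<Rightarrow> bool" where
  "equiuniformity X G E \<longleftrightarrow> compatible_uniformity X E \<and>
     (\<forall>g\<in>G. \<forall>U\<in>E. \<exists>V\<in>E. \<forall>(x, y)\<in>V. (g x, g y) \<in> U) \<and>
     (\<forall>u\<in>ucovs (topspace X) E. \<exists>Ob v. nbhd_id (taup X G) Ob \<and> v \<in> ucovs (topspace X) E \<and>
        refines {{g x | g x. g \<in> Ob \<and> x \<in> V} | V. V \<in> v} u)"

definition pointwise_stabilizer :: "('a \<Rightarrow> 'a) set \<Rightarrow> 'a set \<Rightarrow> ('a \<Rightarrow> 'a) set" where
  "pointwise_stabilizer G F = {h \<in> G. \<forall>x\<in>F. h x = x}"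

definition U_base :: "'a topology \<Rightarrow> ('a \<Rightarrow> 'a) set \<Rightarrow> ('a \<times> 'a) set set \<Rightarrow> ('a \<Rightarrow> 'a) set set set" where
  "U_base X G E = {{{h \<in> G. \<forall>x\<in>F. (g x, h x) \<in> U} | g. g \<in> G} | F U.
      finite F \<and> F \<subseteq> topspace X \<and> U \<in> E}"

definition RK_base :: "'a topology \<Rightarrow> ('a \<Rightarrow> 'a) set \<Rightarrow> ('a \<Rightarrow> 'a) set set set" where
  "RK_base X G = {{setmul (setmul Ob {g}) (pointwise_stabilizer G F) | g. g \<in> G} | Ob F.
      nbhd_id (taup X G) Ob \<and> finite F \<and> F \<subseteq> topspace X}"

definition roelcke_base :: "('a \<Rightarrow> 'a) topology \<Rightarrow> ('a \<Rightarrow> 'a) set \<Rightarrow> ('a \<Rightarrow> 'a) set set set" where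
  "roelcke_base tp G = {{setmul (setmul W {g}) W | g. g \<in> G} | W. nbhd_id tp W}"

definition roelcke_precompact :: "('a \<Rightarrow> 'a) topology \<Rightarrow> ('a \<Rightarrow> 'a) set \<Rightarrow> bool" where
  "roelcke_precompact tp G \<longleftrightarrow> totally_bounded_cov G (ucovs_base G (roelcke_base tp G))"

end

theory Submission
  imports Defs
begin

lemma taup_open_stab:
  assumes "openin (taup X G) W0" "f \<in> W0"
  shows "\<exists>F. finite F \<and> F \<subseteq> topspace X \<and> {h\<in>G. \<forall>x\<in>F. h x = f x} \<subseteq> W0"
proof -
  have "generate_topology_on (insert G {{f \<in> G. f x \<in> Ob} | x Ob. x \<in> topspace X \<and> openin X Ob}) W0"
    using assms(1) unfolding taup_def by (simp add: openin_topology_generated_by_iff)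
  then show ?thesis using assms(2)
  proof (induction arbitrary: f)
    case Empty then show ?case by simp
  next
    case (Int a b)
    from Int.prems have "f \<in> a" "f \<in> b" by auto
    from Int.IH(1)[OF \<open>f \<in> a\<close>] obtain F1 where F1: "finite F1" "F1 \<subseteq> topspace X"
      "{h\<in>G. \<forall>x\<in>F1. h x = f x} \<subseteq> a" by blast
    from Int.IH(2)[OF \<open>f \<in> b\<close>] obtain F2 where F2: "finite F2" "F2 \<subseteq> topspace X"
      "{h\<in>G. \<forall>x\<in>F2. h x = f x} \<subseteq> b" by blast
    have "{h\<in>G. \<forall>x\<in>F1 \<union> F2. h x = f x} \<subseteq> a \<inter> b" using F1(3) F2(3) by blast
    moreover have "finite (F1 \<union> F2)" "F1 \<union> F2 \<subseteq> topspace X" using F1 F2 by auto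
    ultimately show ?case by blast
  next
    case (UN K)
    then obtain k where "k \<in> K" "f \<in> k" by auto
    from UN.IH[OF \<open>k \<in> K\<close> \<open>f \<in> k\<close>] obtain F where "finite F" "F \<subseteq> topspace X" "{h\<in>G. \<forall>x\<in>F. h x = f x} \<subseteq> k" by blast
    with \<open>k \<in> K\<close> show ?case by blast
  next
    case (Basis s)
    then show ?case
    proof (cases "s = G")
      case True then show ?thesis by (intro exI[of _ "{}"]) auto
    next
      case False
      with Basis obtain x Ob where "x \<in> topspace X" "s = {f \<in> G. f x \<in> Ob}" by auto
      then have "{h\<in>G. \<forall>y\<in>{x}. h y = f x} \<subseteq> s" using Basis.prems by auto
      then show ?thesis using \<open>x \<in> topspace X\<close> by (intro exI[of _ "{x}"]) simp
    qed
  qed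
qed

lemma setmul_mono2: "B \<subseteq> B' \<Longrightarrow> setmul A B \<subseteq> setmul A B'"
  unfolding setmul_def by blast

lemma setmul_closed:
  assumes "A \<subseteq> G" "B \<subseteq> G" "\<And>f g. f \<in> G \<Longrightarrow> g \<in> G \<Longrightarrow> f \<circ> g \<in> G"
  shows "setmul A B \<subseteq> G"
proof
  fix k assume "k \<in> setmul A B"
  then obtain a b where "a \<in> A" "b \<in> B" "k = a \<circ> b" unfolding setmul_def by blast
  then show "k \<in> G" using assms by blast
qed

lemma unif_parts:
  assumes "is_uniformity S E"
  shows "\<forall>U\<in>E. Id_on S \<subseteq> U \<and> U \<subseteq> S \<times> S" "\<forall>U\<in>E. \<forall>V\<in>E. U \<inter> V \<in> E"
    "\<forall>U\<in>E. U\<inverse> \<in> E" "\<forall>U\<in>E. \<exists>V\<in>E. V O V \<subseteq> U"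
proof -
  note h = assms[unfolded is_uniformity_def]
  show "\<forall>U\<in>E. Id_on S \<subseteq> U \<and> U \<subseteq> S \<times> S" by (rule conjunct1[OF conjunct2[OF h]])
  show "\<forall>U\<in>E. \<forall>V\<in>E. U \<inter> V \<in> E" by (rule conjunct1[OF conjunct2[OF conjunct2[OF conjunct2[OF h]]]])
  show "\<forall>U\<in>E. U\<inverse> \<in> E" by (rule conjunct1[OF conjunct2[OF conjunct2[OF conjunct2[OF conjunct2[OF h]]]]])
  show "\<forall>U\<in>E. \<exists>V\<in>E. V O V \<subseteq> U" by (rule conjunct2[OF conjunct2[OF conjunct2[OF conjunct2[OF conjunct2[OF h]]]]])
qed

lemma unif_comp: "is_uniformity S E \<Longrightarrow> U \<in> E \<Longrightarrow> \<exists>V\<in>E. V O V \<subseteq> U"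
  using unif_parts(4) by (rule bspec)
lemma unif_int: "is_uniformity S E \<Longrightarrow> U \<in> E \<Longrightarrow> V \<in> E \<Longrightarrow> U \<inter> V \<in> E"
  using unif_parts(2) by metis
lemma unif_inv: "is_uniformity S E \<Longrightarrow> U \<in> E \<Longrightarrow> U\<inverse> \<in> E"
  using unif_parts(3) by (rule bspec)
lemma unif_sub: "is_uniformity S E \<Longrightarrow> U \<in> E \<Longrightarrow> U \<subseteq> S \<times> S"
  using unif_parts(1) by metis

theorem corollary2p2:
  fixes X :: "'a topology" and G :: "('a \<Rightarrow> 'a) set" and E :: "('a \<times> 'a) set set"
  assumes "hom_group X G"
    and "admissible_group_topology X G (taup X G)"
    and "equiuniformity X G E"
    and "ucovs_base G (U_base X G E) = ucovs_base G (RK_base X G)"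
    and "totally_bounded_cov (topspace X) (ucovs (topspace X) E)"
  shows "roelcke_precompact (taup X G) G"
  unfolding roelcke_precompact_def totally_bounded_cov_def
proof
  fix u assume "u \<in> ucovs_base G (roelcke_base (taup X G) G)"
  then obtain W where u: "u \<subseteq> Pow G" and W: "nbhd_id (taup X G) W"
    and ref: "refines {setmul (setmul W {g}) W | g. g \<in> G} u"
    unfolding ucovs_base_def roelcke_base_def by blast
  have tsp: "topspace (taup X G) = G" using assms(2)
    unfolding admissible_group_topology_def topological_group_on_def by blast
  have WG: "W \<subseteq> G" using W tsp unfolding nbhd_id_def by blast
  have hg: "\<And>f g. f \<in> G \<Longrightarrow> g \<in> G \<Longrightarrow> f \<circ> g \<in> G" using assms(1) unfolding hom_group_def by blast
  obtain W0 where "openin (taup X G) W0" "id \<in> W0" "W0 \<subseteq> W" using W unfolding nbhd_id_def by blast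
  then obtain F where F: "finite F" "F \<subseteq> topspace X" and St: "pointwise_stabilizer G F \<subseteq> W"
    using taup_open_stab[of X G W0 id] unfolding pointwise_stabilizer_def by auto
  define c where "c = {setmul (setmul W {g}) (pointwise_stabilizer G F) | g. g \<in> G}"
  have "c \<in> RK_base X G" unfolding c_def RK_base_def using W F by blast
  moreover have "c \<subseteq> Pow G"
  proof
    fix C assume "C \<in> c"
    then obtain g where g: "g \<in> G" "C = setmul (setmul W {g}) (pointwise_stabilizer G F)"
      unfolding c_def by blast
    have "setmul W {g} \<subseteq> G" using setmul_closed[of W G "{g}"] WG g(1) hg by blast
    moreover have "pointwise_stabilizer G F \<subseteq> G" unfolding pointwise_stabilizer_def by blast
    ultimately have "C \<subseteq> G" using g(2) setmul_closed[OF _ _ hg] by metis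
    then show "C \<in> Pow G" by blast
  qed
  ultimately have "c \<in> ucovs_base G (RK_base X G)" unfolding ucovs_base_def refines_def by blast
  then have "c \<in> ucovs_base G (U_base X G E)" using assms(4) by simp
  then have "\<exists>b\<in>U_base X G E. refines b c" unfolding ucovs_base_def by simp
  then obtain b where "b \<in> U_base X G E" and refbc: "refines b c" ..
  then have "\<exists>F' U. b = {{h \<in> G. \<forall>x\<in>F'. (g x, h x) \<in> U} | g. g \<in> G} \<and>
      finite F' \<and> F' \<subseteq> topspace X \<and> U \<in> E"
    unfolding U_base_def by (simp only: mem_Collect_eq)
  then obtain F' where "\<exists>U. b = {{h \<in> G. \<forall>x\<in>F'. (g x, h x) \<in> U} | g. g \<in> G} \<and>
      finite F' \<and> F' \<subseteq> topspace X \<and> U \<in> E" ..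
  then obtain U where bF: "b = {{h \<in> G. \<forall>x\<in>F'. (g x, h x) \<in> U} | g. g \<in> G} \<and>
      finite F' \<and> F' \<subseteq> topspace X \<and> U \<in> E" ..
  have bdef: "b = {{h \<in> G. \<forall>x\<in>F'. (g x, h x) \<in> U} | g. g \<in> G}"
    using bF by (rule conjunct1)
  have F': "finite F'" "F' \<subseteq> topspace X" "U \<in> E" using bF by simp_all
  define S where "S = topspace X"
  have unif: "is_uniformity S E" using assms(3)
    unfolding S_def by (simp add: equiuniformity_def compatible_uniformity_def)
  then obtain V where V: "V \<in> E" "V O V \<subseteq> U" using unif_comp[OF _ F'(3)] by blast
  define U' where "U' = V \<inter> V\<inverse>"
  have U'E: "U' \<in> E" using unif_int[OF unif V(1) unif_inv[OF unif V(1)]] unfolding U'_def .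
  have U'S: "U' \<subseteq> S \<times> S" using unif_sub[OF unif U'E] .
  have U'sym: "\<And>a b. (a, b) \<in> U' \<Longrightarrow> (b, a) \<in> U'" unfolding U'_def by auto
  have U'U: "\<And>a b d. (a, b) \<in> U' \<Longrightarrow> (b, d) \<in> U' \<Longrightarrow> (a, d) \<in> U" using V unfolding U'_def by blast
  have sub1: "{U' `` {x} | x. x \<in> S} \<subseteq> Pow S" using U'S by blast
  have "refines {U' `` {x} | x. x \<in> S} {U' `` {x} | x. x \<in> S}" unfolding refines_def by blast
  then have "\<exists>V\<in>E. refines {V `` {x} | x. x \<in> S} {U' `` {x} | x. x \<in> S}" using U'E by (rule bexI[where x=U'])
  with sub1 have cin: "{U' `` {x} | x. x \<in> S} \<in> ucovs S E" unfolding ucovs_def mem_Collect_eq by (rule conjI)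
  have "\<forall>u\<in>ucovs S E. \<exists>v\<subseteq>u. finite v \<and> S \<subseteq> \<Union>v"
    using assms(5) unfolding totally_bounded_cov_def S_def .
  then have "\<exists>v\<subseteq>{U' `` {x} | x. x \<in> S}. finite v \<and> S \<subseteq> \<Union>v" using cin by (rule bspec)
  then obtain v where v: "v \<subseteq> {U' `` {x} | x. x \<in> S}" "finite v" "S \<subseteq> \<Union>v"
    by (elim exE conjE) (rule that)
  have "v \<subseteq> (\<lambda>x. U' `` {x}) ` S" using v(1) by blast
  then obtain Z where Z: "Z \<subseteq> S" "finite Z" "v = (\<lambda>x. U' `` {x}) ` Z"
    using finite_subset_image[OF v(2)] by blast
  have cov: "\<And>p. p \<in> S \<Longrightarrow> \<exists>z\<in>Z. (z, p) \<in> U'" using v(3) Z(3) by blast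
  have maps: "\<And>h y. h \<in> G \<Longrightarrow> y \<in> S \<Longrightarrow> h y \<in> S"
  proof -
    fix h y assume "h \<in> G" "y \<in> S"
    then have "homeomorphic_map X X h" using assms(1) unfolding hom_group_def by blast
    then show "h y \<in> S" using \<open>y \<in> S\<close> unfolding S_def
      by (metis homeomorphic_imp_surjective_map image_eqI)
  qed
  define phi where "phi = (\<lambda>h. restrict (\<lambda>y. SOME z. z \<in> Z \<and> (z, h y) \<in> U') F')"
  have phiZ: "\<And>h y. h \<in> G \<Longrightarrow> y \<in> F' \<Longrightarrow> phi h y \<in> Z \<and> (phi h y, h y) \<in> U'"
  proof -
    fix h y assume "h \<in> G" "y \<in> F'"
    then have "\<exists>z. z \<in> Z \<and> (z, h y) \<in> U'" using cov maps F'(2) S_def by blast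
    then have "(SOME z. z \<in> Z \<and> (z, h y) \<in> U') \<in> Z \<and> ((SOME z. z \<in> Z \<and> (z, h y) \<in> U'), h y) \<in> U'"
      by (rule someI_ex)
    moreover have "phi h y = (SOME z. z \<in> Z \<and> (z, h y) \<in> U')" unfolding phi_def using \<open>y \<in> F'\<close> by simp
    ultimately show "phi h y \<in> Z \<and> (phi h y, h y) \<in> U'" by simp
  qed
  have "phi ` G \<subseteq> PiE F' (\<lambda>_. Z)" using phiZ unfolding phi_def by auto
  then have finphi: "finite (phi ` G)" using finite_PiE[OF F'(1), of "\<lambda>_. Z"] Z(2)
    by (meson finite_subset)
  define rep where "rep = (\<lambda>s. SOME g. g \<in> G \<and> phi g = s)"
  define Gs where "Gs = rep ` (phi ` G)"
  have Gsf: "finite Gs" unfolding Gs_def using finphi by simp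
  have repG: "\<And>h. h \<in> G \<Longrightarrow> rep (phi h) \<in> G \<and> phi (rep (phi h)) = phi h"
  proof -
    fix h assume "h \<in> G"
    then have "\<exists>g. g \<in> G \<and> phi g = phi h" by blast
    then show "rep (phi h) \<in> G \<and> phi (rep (phi h)) = phi h" unfolding rep_def by (rule someI_ex)
  qed
  have GsG: "Gs \<subseteq> G" unfolding Gs_def using repG by auto
  define B where "B = (\<lambda>g. {h \<in> G. \<forall>x\<in>F'. (g x, h x) \<in> U})"
  have Gcov: "G \<subseteq> (\<Union>g\<in>Gs. B g)"
  proof
    fix h assume h: "h \<in> G"
    let ?g = "rep (phi h)"
    have "\<forall>x\<in>F'. (?g x, h x) \<in> U"
    proof
      fix y assume y: "y \<in> F'"
      have "(phi h y, ?g y) \<in> U'" using phiZ[OF conjunct1[OF repG[OF h]] y] repG[OF h] by simp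
      moreover have "(phi h y, h y) \<in> U'" using phiZ[OF h y] by blast
      ultimately show "(?g y, h y) \<in> U" using U'U U'sym by blast
    qed
    then have "h \<in> B ?g" unfolding B_def using h by blast
    moreover have "?g \<in> Gs" unfolding Gs_def using h by blast
    ultimately show "h \<in> (\<Union>g\<in>Gs. B g)" by blast
  qed
  have exA: "\<And>g0. g0 \<in> Gs \<Longrightarrow> \<exists>A. A \<in> u \<and> B g0 \<subseteq> A"
  proof -
    fix g0 assume "g0 \<in> Gs"
    then have "B g0 \<in> b" unfolding bdef B_def using GsG by blast
    then obtain C where "C \<in> c" "B g0 \<subseteq> C" using refbc unfolding refines_def by blast
    then obtain g where g: "g \<in> G" "C = setmul (setmul W {g}) (pointwise_stabilizer G F)"
      unfolding c_def by blast
    then have "C \<subseteq> setmul (setmul W {g}) W" using setmul_mono2[OF St] by blast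
    moreover obtain A where "A \<in> u" "setmul (setmul W {g}) W \<subseteq> A"
      using ref g(1) unfolding refines_def by blast
    ultimately show "\<exists>A. A \<in> u \<and> B g0 \<subseteq> A" using \<open>B g0 \<subseteq> C\<close> by blast
  qed
  define vv where "vv = (\<lambda>g0. SOME A. A \<in> u \<and> B g0 \<subseteq> A) ` Gs"
  have "\<And>g0. g0 \<in> Gs \<Longrightarrow> (SOME A. A \<in> u \<and> B g0 \<subseteq> A) \<in> u \<and> B g0 \<subseteq> (SOME A. A \<in> u \<and> B g0 \<subseteq> A)"
    using exA by (rule someI_ex)
  then have "vv \<subseteq> u \<and> finite vv \<and> G \<subseteq> \<Union>vv" unfolding vv_def using Gsf Gcov by fastforce
  then show "\<exists>v\<subseteq>u. finite v \<and> G \<subseteq> \<Union>v" by blast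
qed

end
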